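(* For every $\epsilon\in(0,1)$ there exist an expander graph $\mathcal{G}=(\mathcal{V},\mathcal{E})$ and two vertices $s,t\in\mathcal{V}$ such that any (possibly randomized) algorithm in the adjacency query model that outputs $\hat r_{\mathcal{G}}(s,t)$ with $\hat r_{\mathcal{G}}(s,t)\approx_\epsilon r_{\mathcal{G}}(s,t)$ with success probability at least $2/3$ must make $\Omega(1/\epsilon)$ queries.
   Context: $r_{\mathcal{G}}(s,t)=(\mathbf{e}_s-\mathbf{e}_t)^T\mathbf{L}^\dagger(\mathbf{e}_s-\mathbf{e}_t)$ with $\mathbf{L}=\mathbf{D}-\mathbf{A}$ the graph Laplacian. $x\approx_\epsilon y$ means $(1-\epsilon)y\le x\le(1+\epsilon)y$. Adjacency query model: in constant time one can query the degree of any vertex, the $i$-th neighbor of any vertex, and a uniformly random vertex. A graph is an expander if its conductance $\phi_{\mathcal{G}}=\min_{S\subset\mathcal{V}}\frac{|\{(u,v)\in\mathcal{E}:u\in S,v\notin S\}|}{\min\{\sum_{u\in S}d_u,\sum_{u\notin S}d_u\}}$ is $\tilde\Omega(1)$. *)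

theory Defs
  imports "HOL-Probability.Probability" "Jordan_Normal_Form.Matrix"
begin

text \<open>Undirected simple graphs on vertex set {0..<nv G}, given by adjacency lists
  (the i-th neighbour of v is adj G v ! i).\<close>
record graph =
  nv  :: nat
  adj :: "nat \<Rightarrow> nat list"

definition valid_graph :: "graph \<Rightarrow> bool" where
  "valid_graph G \<longleftrightarrow> (\<forall>v < nv G. distinct (adj G v) \<and> v \<notin> set (adj G v) \<and>
      set (adj G v) \<subseteq> {..<nv G} \<and>
      (\<forall>u < nv G. u \<in> set (adj G v) \<longleftrightarrow> v \<in> set (adj G u)))"

definition deg :: "graph \<Rightarrow> nat \<Rightarrow> nat" where
  "deg G v = (if v < nv G then length (adj G v) else 0)"

definition nbr :: "graph \<Rightarrow> nat \<Rightarrow> nat \<Rightarrow> nat option" where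
  "nbr G v i = (if v < nv G \<and> i < deg G v then Some (adj G v ! i) else None)"

text \<open>Randomized algorithms in the adjacency query model, as (well-founded) decision trees:
  output a value, flip a fair coin (free), or make one of the three queries
  (degree, i-th neighbour, uniformly random vertex), each costing one query.\<close>
datatype qalg =
    Output real
  | Coin "bool \<Rightarrow> qalg"
  | QDeg nat "nat \<Rightarrow> qalg"
  | QNbr nat nat "nat option \<Rightarrow> qalg"
  | QRand "nat \<Rightarrow> qalg"

text \<open>Output distribution of running an algorithm on G with a budget of k queries;
  None means the budget was exceeded (counted as failure).\<close>
primrec run :: "graph \<Rightarrow> qalg \<Rightarrow> nat \<Rightarrow> real option pmf" where
  "run G (Output r) k = return_pmf (Some r)"
| "run G (Coin f) k = bind_pmf (bernoulli_pmf (1/2)) (\<lambda>b. run G (f b) k)"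
| "run G (QDeg v f) k = (if k = 0 then return_pmf None else run G (f (deg G v)) (k - 1))"
| "run G (QNbr v i f) k = (if k = 0 then return_pmf None else run G (f (nbr G v i)) (k - 1))"
| "run G (QRand f) k = (if k = 0 then return_pmf None
      else bind_pmf (pmf_of_set {..<nv G}) (\<lambda>u. run G (f u) (k - 1)))"

definition laplacian :: "graph \<Rightarrow> real mat" where
  "laplacian G = mat (nv G) (nv G)
     (\<lambda>(i, j). if i = j then real (deg G i) else if j \<in> set (adj G i) then -1 else 0)"

definition is_pinv :: "real mat \<Rightarrow> real mat \<Rightarrow> bool" where
  "is_pinv L M \<longleftrightarrow> M \<in> carrier_mat (dim_col L) (dim_row L) \<and>
     L * M * L = L \<and> M * L * M = M \<and>
     transpose_mat (L * M) = L * M \<and> transpose_mat (M * L) = M * L"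

definition pinv :: "real mat \<Rightarrow> real mat" where
  "pinv L = (THE M. is_pinv L M)"

definition eff_res :: "graph \<Rightarrow> nat \<Rightarrow> nat \<Rightarrow> real" where
  "eff_res G s t = (let x = unit_vec (nv G) s - unit_vec (nv G) t
                    in x \<bullet> (pinv (laplacian G) *\<^sub>v x))"

definition approx_eq :: "real \<Rightarrow> real \<Rightarrow> real \<Rightarrow> bool" where
  "approx_eq \<epsilon> x y \<longleftrightarrow> (1 - \<epsilon>) * y \<le> x \<and> x \<le> (1 + \<epsilon>) * y"

definition cut_size :: "graph \<Rightarrow> nat set \<Rightarrow> nat" where
  "cut_size G S = card {(u, v). u \<in> S \<and> v \<in> {..<nv G} - S \<and> v \<in> set (adj G u)}"

definition vol :: "graph \<Rightarrow> nat set \<Rightarrow> real" where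
  "vol G S = (\<Sum>u\<in>S. real (deg G u))"

definition conductance :: "graph \<Rightarrow> real" where
  "conductance G = Min {real (cut_size G S) / min (vol G S) (vol G ({..<nv G} - S)) | S.
      S \<subseteq> {..<nv G} \<and> S \<noteq> {} \<and> S \<noteq> {..<nv G}}"

definition expander :: "real \<Rightarrow> graph \<Rightarrow> bool" where
  "expander c G \<longleftrightarrow> 2 \<le> nv G \<and> c \<le> conductance G"

definition success_prob :: "qalg \<Rightarrow> graph \<Rightarrow> nat \<Rightarrow> nat \<Rightarrow> real \<Rightarrow> nat \<Rightarrow> real" where
  "success_prob A G s t \<epsilon> k =
     measure_pmf.prob (run G A k) {Some r | r. approx_eq \<epsilon> r (eff_res G s t)}"

end

theory Submission
  imports Defs
begin

lemma prob_bind_pmf: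
  "measure_pmf.prob (bind_pmf M f) X = measure_pmf.expectation M (\<lambda>x. measure_pmf.prob (f x) X)"
  unfolding measure_pmf_bind
  by (rule measure_pmf.measure_bind[where N="count_space UNIV"])
     (auto simp: space_subprob_algebra prob_space_imp_subprob_space measure_pmf.prob_space_axioms
           intro!: measure_pmf_in_subprob_algebra)

lemma avg_abs: "\<bar>(a1::real) - b1\<bar> \<le> h1 \<Longrightarrow> \<bar>(a2::real) - b2\<bar> \<le> (h2::real) \<Longrightarrow> \<bar>(a1-b1)/2 + (a2-b2)/2\<bar> \<le> h1/2 + h2/2"
proof -
  assume a: "\<bar>(a1::real) - b1\<bar> \<le> h1" "\<bar>(a2::real) - b2\<bar> \<le> (h2::real)"
  have "\<bar>(a1-b1)/2 + (a2-b2)/2\<bar> \<le> \<bar>(a1-b1)/2\<bar> + \<bar>(a2-b2)/2\<bar>" by (rule abs_triangle_ineq)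
  also have "\<dots> \<le> h1/2 + h2/2" using a by simp
  finally show ?thesis .
qed

lemma prob_diff_le1: "\<bar>measure_pmf.prob p X - measure_pmf.prob p' Y\<bar> \<le> 1"
proof -
  have "0 \<le> measure_pmf.prob p X" "measure_pmf.prob p X \<le> 1" "0 \<le> measure_pmf.prob p' Y" "measure_pmf.prob p' Y \<le> 1"
    by (auto simp: measure_pmf.prob_le_1)
  then show ?thesis by (simp only: abs_le_iff) linarith
qed

lemma run_zero: "nv G = nv H \<Longrightarrow> run G A 0 = run H A 0"
  by (induction A) auto

primrec hitp :: "graph \<Rightarrow> (nat \<times> nat) set \<Rightarrow> qalg \<Rightarrow> nat \<Rightarrow> real" where
  "hitp G D (Output r) k = 0"
| "hitp G D (Coin f) k = (hitp G D (f True) k + hitp G D (f False) k) / 2"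
| "hitp G D (QDeg v f) k = (if k = 0 then 0 else hitp G D (f (deg G v)) (k - 1))"
| "hitp G D (QNbr v i f) k = (if k = 0 then 0 else if (v, i) \<in> D then 1
      else hitp G D (f (nbr G v i)) (k - 1))"
| "hitp G D (QRand f) k = (if k = 0 then 0 else (\<Sum>u<nv G. hitp G D (f u) (k - 1)) / real (nv G))"

lemma hitp_nonneg: "0 \<le> hitp G D A k"
  by (induction A arbitrary: k) (auto intro!: sum_nonneg divide_nonneg_nonneg)

lemma coupling:
  assumes nvp: "nv H = nv G" "0 < nv G" and degs: "\<And>v. deg H v = deg G v"
    and nbrs: "\<And>v i. (v, i) \<notin> D \<Longrightarrow> nbr H v i = nbr G v i"
  shows "\<bar>measure_pmf.prob (run G A k) X - measure_pmf.prob (run H A k) X\<bar> \<le> hitp G D A k"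
proof (induction A arbitrary: k)
  case (Output r)
  then show ?case by simp
next
  case (Coin f)
  have "\<bar>measure_pmf.prob (run G (Coin f) k) X - measure_pmf.prob (run H (Coin f) k) X\<bar>
     = \<bar>(measure_pmf.prob (run G (f True) k) X - measure_pmf.prob (run H (f True) k) X)/2
        + (measure_pmf.prob (run G (f False) k) X - measure_pmf.prob (run H (f False) k) X)/2\<bar>"
    apply (simp add: prob_bind_pmf integral_bernoulli_pmf)
    apply (rule arg_cong[where f=abs])
    apply (simp add: field_simps)
    done
  also have "\<dots> \<le> hitp G D (f True) k / 2 + hitp G D (f False) k / 2"
    using Coin[of "f True" k] Coin[of "f False" k]
    by (intro avg_abs) auto
  finally show ?case by simp
next
  case (QDeg v f)
  then show ?case by (simp add: degs)
next
  case (QNbr v i f)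
  show ?case
  proof (cases "k = 0")
    case True then show ?thesis by simp
  next
    case False
    show ?thesis
    proof (cases "(v, i) \<in> D")
      case True
      have "\<bar>measure_pmf.prob (run G (QNbr v i f) k) X - measure_pmf.prob (run H (QNbr v i f) k) X\<bar> \<le> 1"
        by (rule prob_diff_le1)
      then show ?thesis using True False by simp
    next
      case nd: False
      then show ?thesis using False QNbr by (simp add: nbrs)
    qed
  qed
next
  case (QRand f)
  show ?case
  proof (cases "k = 0")
    case True then show ?thesis by simp
  next
    case False
    have ne: "{..<nv G} \<noteq> {}" using nvp by auto
    have "\<bar>measure_pmf.prob (run G (QRand f) k) X - measure_pmf.prob (run H (QRand f) k) X\<bar>
      = \<bar>(\<Sum>u<nv G. measure_pmf.prob (run G (f u) (k-1)) X - measure_pmf.prob (run H (f u) (k-1)) X) / real (nv G)\<bar>"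
      using False ne nvp by (simp add: prob_bind_pmf integral_pmf_of_set sum_subtractf diff_divide_distrib)
    also have "\<dots> \<le> (\<Sum>u<nv G. \<bar>measure_pmf.prob (run G (f u) (k-1)) X - measure_pmf.prob (run H (f u) (k-1)) X\<bar>) / real (nv G)"
      by (simp add: divide_right_mono sum_abs)
    also have "\<dots> \<le> (\<Sum>u<nv G. hitp G D (f u) (k - 1)) / real (nv G)"
      by (intro divide_right_mono sum_mono QRand) auto
    finally show ?thesis using False by simp
  qed
qed

lemma averaging:
  assumes fin: "finite I"
    and uniq: "\<And>x j j'. j \<in> I \<Longrightarrow> j' \<in> I \<Longrightarrow> x \<in> D j \<Longrightarrow> x \<in> D j' \<Longrightarrow> j = j'"
  shows "(\<Sum>j\<in>I. hitp G (D j) A k) \<le> real k"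
proof (induction A arbitrary: k)
  case (Output r)
  then show ?case by simp
next
  case (Coin f)
  have "(\<Sum>j\<in>I. hitp G (D j) (Coin f) k) = ((\<Sum>j\<in>I. hitp G (D j) (f True) k) + (\<Sum>j\<in>I. hitp G (D j) (f False) k))/2"
    by (simp add: sum.distrib sum_divide_distrib[symmetric])
  then show ?case using Coin[of "f True" k] Coin[of "f False" k] by simp
next
  case (QDeg v f)
  show ?case
  proof (cases k)
    case 0 then show ?thesis by simp
  next
    case (Suc k')
    then show ?thesis using QDeg[of "f (deg G v)" k'] by simp
  qed
next
  case (QNbr v i f)
  show ?case
  proof (cases k)
    case 0 then show ?thesis by simp
  next
    case (Suc k')
    have c: "card (I \<inter> {j. (v,i) \<in> D j}) \<le> 1"
      using uniq by (auto simp: card_le_Suc0_iff_eq fin)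
    have "(\<Sum>j\<in>I. hitp G (D j) (QNbr v i f) k)
       \<le> (\<Sum>j\<in>I. (if (v,i) \<in> D j then 1 else 0) + hitp G (D j) (f (nbr G v i)) k')"
      using Suc by (intro sum_mono) (auto simp: hitp_nonneg)
    also have "\<dots> = real (card (I \<inter> {j. (v,i) \<in> D j})) + (\<Sum>j\<in>I. hitp G (D j) (f (nbr G v i)) k')"
      by (simp add: sum.distrib sum.If_cases fin)
    also have "\<dots> \<le> 1 + real k'"
    proof -
      have "(\<Sum>j\<in>I. hitp G (D j) (f (nbr G v i)) k') \<le> real k'"
        using QNbr[of "f (nbr G v i)" k'] by simp
      then show ?thesis using c by linarith
    qed
    finally show ?thesis using Suc by simp
  qed
next
  case (QRand f)
  show ?case
  proof (cases k)
    case 0 then show ?thesis by simp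
  next
    case (Suc k')
    have "(\<Sum>j\<in>I. hitp G (D j) (QRand f) k) = (\<Sum>u<nv G. \<Sum>j\<in>I. hitp G (D j) (f u) k') / real (nv G)"
      using Suc by (simp add: sum_divide_distrib[symmetric] sum.swap[of _ I])
    also have "\<dots> \<le> (\<Sum>u<nv G. real k') / real (nv G)"
      by (intro divide_right_mono sum_mono QRand) auto
    also have "\<dots> \<le> real k" using Suc by simp
    finally show ?thesis .
  qed
qed

lemma pinv_unique:
  assumes L: "L \<in> carrier_mat n n" and p1: "is_pinv L M1" and p2: "is_pinv L M2"
  shows "M1 = M2"
proof -
  have M1: "M1 \<in> carrier_mat n n" and M2: "M2 \<in> carrier_mat n n"
    using p1 p2 L by (auto simp: is_pinv_def)
  have a1: "L * M1 * L = L" "M1 * L * M1 = M1" "transpose_mat (L * M1) = L * M1" "transpose_mat (M1 * L) = M1 * L"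
    using p1 by (auto simp: is_pinv_def)
  have a2: "L * M2 * L = L" "M2 * L * M2 = M2" "transpose_mat (L * M2) = L * M2" "transpose_mat (M2 * L) = M2 * L"
    using p2 by (auto simp: is_pinv_def)
  note T = transpose_mult[of _ n n _ n]
  have LT1: "transpose_mat L = transpose_mat L * (L * M2)"
  proof -
    have "transpose_mat L = transpose_mat (L * M2 * L)" using a2 by simp
    also have "\<dots> = transpose_mat L * transpose_mat (L * M2)"
      using L M2 by (subst transpose_mult[of _ n n _ n]) auto
    finally show ?thesis using a2 by simp
  qed
  have LT2: "transpose_mat L = (M1 * L) * transpose_mat L"
  proof -
    have "transpose_mat L = transpose_mat (L * (M1 * L))" using a1 L M1 by simp
    also have "\<dots> = transpose_mat (M1 * L) * transpose_mat L"
      using L M1 by (subst transpose_mult[of _ n n _ n]) auto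
    finally show ?thesis using a1 by simp
  qed
  have e1: "M1 = M1 * L * M2"
  proof -
    have "M1 = M1 * (L * M1)" using a1 L M1 by simp
    also have "\<dots> = M1 * transpose_mat (L * M1)" using a1 by simp
    also have "\<dots> = M1 * (transpose_mat M1 * transpose_mat L)"
      using L M1 by (subst transpose_mult[of _ n n _ n]) auto
    also have "\<dots> = M1 * (transpose_mat M1 * (transpose_mat L * (L * M2)))"
      using LT1 by simp
    also have "\<dots> = M1 * (transpose_mat M1 * transpose_mat L) * L * M2"
      using L M1 M2 by (simp add: assoc_mult_mat[of _ n n _ n _ n])
    also have "\<dots> = M1 * transpose_mat (L * M1) * L * M2"
      using L M1 by (subst transpose_mult[of _ n n _ n]) auto
    also have "\<dots> = M1 * L * M1 * L * M2" using a1 L M1 by simp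
    also have "\<dots> = M1 * L * M2" using a1 by simp
    finally show ?thesis .
  qed
  have e2: "M2 = M1 * L * M2"
  proof -
    have "M2 = (M2 * L) * M2" using a2 by simp
    also have "\<dots> = transpose_mat (M2 * L) * M2" using a2 by simp
    also have "\<dots> = (transpose_mat L * transpose_mat M2) * M2"
      using L M2 by (subst transpose_mult[of _ n n _ n]) auto
    also have "\<dots> = (((M1 * L) * transpose_mat L) * transpose_mat M2) * M2"
      using LT2 by simp
    also have "\<dots> = M1 * L * (transpose_mat L * transpose_mat M2) * M2"
      using L M1 M2 by (simp add: assoc_mult_mat[of _ n n _ n _ n])
    also have "\<dots> = M1 * L * transpose_mat (M2 * L) * M2"
      using L M2 by (subst transpose_mult[of _ n n _ n]) auto
    also have "\<dots> = M1 * L * (M2 * L * M2)" using a2 L M1 M2 by (simp add: assoc_mult_mat[of _ n n _ n _ n])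
    also have "\<dots> = M1 * L * M2" using a2 by simp
    finally show ?thesis .
  qed
  show ?thesis using e1 e2 by simp
qed

definition PI :: "nat \<Rightarrow> real mat" where
  "PI n = mat n n (\<lambda>(i,j). (if i = j then 1 else 0) - 1 / real n)"

lemma mat_mult_mat: "mat n n f * mat n n g = mat n n (\<lambda>(i,j). \<Sum>k<n. f (i,k) * g (k,j))"
  by (rule eq_matI) (auto simp: scalar_prod_def atLeast0LessThan row_def col_def intro!: sum.cong)

lemma PI_mult:
  assumes "\<And>j. j < n \<Longrightarrow> (\<Sum>k<n. x (k,j)) = 0"
  shows "PI n * mat n n x = mat n n x"
  unfolding PI_def mat_mult_mat
proof (rule eq_matI)
  fix i j assume ij: "i < dim_row (mat n n x)" "j < dim_col (mat n n x)"
  have d: "(\<Sum>k<n. (if i = k then 1 else 0) * x (k, j)) = (\<Sum>k<n. if i = k then x (i, j) else 0)"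
    by (rule sum.cong) auto
  have "(\<Sum>k<n. ((if i = k then 1 else 0) - 1 / real n) * x (k, j))
      = (\<Sum>k<n. (if i = k then 1 else 0) * x (k, j)) - (\<Sum>k<n. x (k, j)) / real n"
    by (simp add: left_diff_distrib sum_subtractf sum_divide_distrib)
  also have "\<dots> = x (i,j)" using ij assms by (simp add: d)
  finally show "mat n n (\<lambda>(i, j). \<Sum>k<n. (case (i, k) of (i, j) \<Rightarrow> (if i = j then 1 else 0) - 1 / real n) * x (k, j)) $$ (i, j) =
         mat n n x $$ (i, j)" using ij by simp
qed auto

lemma PI_sym: "transpose_mat (PI n) = PI n"
  unfolding PI_def by (rule eq_matI) auto

lemma pinv_eq: "L \<in> carrier_mat n n \<Longrightarrow> is_pinv L M \<Longrightarrow> pinv L = M"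
  unfolding pinv_def using pinv_unique by blast

lemma pinv_suff:
  assumes L: "L \<in> carrier_mat n n" and M: "M \<in> carrier_mat n n"
    and LT: "transpose_mat L = L" and MT: "transpose_mat M = M"
    and LM: "L * M = PI n" and PL: "PI n * L = L" and PM: "PI n * M = M"
  shows "is_pinv L M"
proof -
  have hML: "M * L = PI n"
  proof -
    have "M * L = transpose_mat M * transpose_mat L" using LT MT by simp
    also have "\<dots> = transpose_mat (L * M)" using L M by (subst transpose_mult[of _ n n _ n]) auto
    finally show ?thesis using LM PI_sym by simp
  qed
  show ?thesis unfolding is_pinv_def
    using L M LM hML PL PM PI_sym by auto
qed

lemma lap_eq: "laplacian G = mat (nv G) (nv G) (\<lambda>(i, j). if i = j then real (deg G i) else if j \<in> set (adj G i) then -1 else 0)"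
  by (simp add: laplacian_def)

lemma lap_carrier: "laplacian G \<in> carrier_mat (nv G) (nv G)"
  by (simp add: laplacian_def)

lemma lap_sym:
  assumes "valid_graph G"
  shows "transpose_mat (laplacian G) = laplacian G"
  unfolding laplacian_def using assms
  by (intro eq_matI) (auto simp: valid_graph_def)

lemma lap_rowsum:
  assumes v: "valid_graph G" and i: "i < nv G"
  shows "(\<Sum>j<nv G. (if i = j then real (deg G i) else if j \<in> set (adj G i) then -1 else 0)) = 0"
proof -
  have sub: "set (adj G i) \<subseteq> {..<nv G}" and ni: "i \<notin> set (adj G i)" and d: "distinct (adj G i)"
    using v i by (auto simp: valid_graph_def)
  have "(\<Sum>j<nv G. (if i = j then real (deg G i) else if j \<in> set (adj G i) then -1 else 0))
      = (\<Sum>j<nv G. (if i = j then real (deg G i) else 0)) + (\<Sum>j<nv G. if j \<in> set (adj G i) then -1 else 0)"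
    using ni by (subst sum.distrib[symmetric]) (auto intro!: sum.cong)
  also have "(\<Sum>j<nv G. if j \<in> set (adj G i) then -1 else (0::real)) = - real (card ({..<nv G} \<inter> set (adj G i)))"
    by (simp add: sum.If_cases)
  also have "{..<nv G} \<inter> set (adj G i) = set (adj G i)" using sub by auto
  also have "card (set (adj G i)) = deg G i" using d i by (simp add: deg_def distinct_card)
  finally show ?thesis using i by simp
qed

lemma PI_lap:
  assumes v: "valid_graph G"
  shows "PI (nv G) * laplacian G = laplacian G"
  unfolding lap_eq
proof (rule PI_mult)
  fix j assume j: "j < nv G"
  have "(\<Sum>k<nv G. (case (k, j) of (i, j) \<Rightarrow> if i = j then real (deg G i) else if j \<in> set (adj G i) then - 1 else 0))
    = (\<Sum>k<nv G. (if j = k then real (deg G j) else if k \<in> set (adj G j) then -1 else 0))"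
    using v j by (intro sum.cong) (auto simp: valid_graph_def)
  also have "\<dots> = 0" using lap_rowsum[OF v j] .
  finally show "(\<Sum>k<nv G. (case (k, j) of (i, j) \<Rightarrow> if i = j then real (deg G i) else if j \<in> set (adj G i) then - 1 else 0)) = 0" .
qed

lemma eff_res_mat:
  assumes P: "pinv (laplacian G) = mat (nv G) (nv G) m" and s: "s < nv G" and t: "t < nv G"
  shows "eff_res G s t = m (s,s) - m (s,t) - m (t,s) + m (t,t)"
proof -
  let ?n = "nv G"
  define x :: "real vec" where "x = unit_vec ?n s - unit_vec ?n t"
  have xi: "\<And>i. i < ?n \<Longrightarrow> x $ i = (if i = s then 1 else 0) - (if i = t then 1 else 0)"
    unfolding x_def by (auto simp: unit_vec_def)
  have dx: "dim_vec x = ?n" unfolding x_def by simp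
  have Mx: "\<And>i. i < ?n \<Longrightarrow> (mat ?n ?n m *\<^sub>v x) $ i = m (i,s) - m (i,t)"
  proof -
    fix i assume i: "i < ?n"
    have "(mat ?n ?n m *\<^sub>v x) $ i = (\<Sum>k<?n. m (i,k) * x $ k)"
      using i dx by (simp add: scalar_prod_def atLeast0LessThan row_def)
    also have "\<dots> = (\<Sum>k<?n. (if k = s then m (i,k) else 0) - (if k = t then m (i,k) else 0))"
      by (intro sum.cong) (auto simp: xi)
    also have "\<dots> = m (i,s) - m (i,t)" using s t by (simp add: sum_subtractf)
    finally show "(mat ?n ?n m *\<^sub>v x) $ i = m (i,s) - m (i,t)" .
  qed
  have "eff_res G s t = x \<bullet> (mat ?n ?n m *\<^sub>v x)"
    unfolding eff_res_def Let_def x_def[symmetric] P ..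
  also have "\<dots> = (\<Sum>k<?n. x $ k * (m (k,s) - m (k,t)))"
    unfolding scalar_prod_def by (auto simp: atLeast0LessThan Mx simp del: index_mult_mat_vec intro!: sum.cong)
  also have "\<dots> = (\<Sum>k<?n. (if k = s then m (k,s) - m (k,t) else 0) - (if k = t then m (k,s) - m (k,t) else 0))"
    by (intro sum.cong) (auto simp: xi)
  also have "\<dots> = m (s,s) - m (s,t) - m (t,s) + m (t,t)" using s t by (simp add: sum_subtractf)
  finally show ?thesis .
qed

definition pm :: "nat \<Rightarrow> nat" where "pm v = (if even v then Suc v else v - 1)"
definition pj :: "nat \<Rightarrow> nat \<Rightarrow> nat" where
  "pj j v = (if v = 0 then 2*j else if v = 1 then 2*j+1 else if v = 2*j then 0
             else if v = 2*j+1 then 1 else pm v)"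
definition cfilt :: "nat \<Rightarrow> nat \<Rightarrow> nat list" where
  "cfilt n v = filter (\<lambda>u. u \<noteq> v \<and> u \<noteq> pm v) [0..<n]"
definition cpg :: "nat \<Rightarrow> (nat \<Rightarrow> nat) \<Rightarrow> graph" where
  "cpg n p = \<lparr>nv = n, adj = (\<lambda>v. map (\<lambda>u. if u = p v then pm v else u) (cfilt n v))\<rparr>"
definition good :: "nat \<Rightarrow> (nat \<Rightarrow> nat) \<Rightarrow> bool" where
  "good n p \<longleftrightarrow> (\<forall>v<n. p v < n \<and> p v \<noteq> v \<and> p (p v) = v)"

lemma good_pm: "even n \<Longrightarrow> good n pm"
  unfolding good_def pm_def by presburger

lemma pm_ge2: "2 \<le> v \<Longrightarrow> 2 \<le> pm v"
  unfolding pm_def by presburger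

lemma pm_j: "pm v = 2*j \<longleftrightarrow> v = 2*j+1" "pm v = 2*j+1 \<longleftrightarrow> v = 2*j"
  unfolding pm_def by presburger+

lemma good_D: "good n p \<Longrightarrow> v < n \<Longrightarrow> p v < n \<and> p v \<noteq> v \<and> p (p v) = v"
  by (simp add: good_def)

lemma good_iff: "good n p \<Longrightarrow> u < n \<Longrightarrow> v < n \<Longrightarrow> u = p v \<longleftrightarrow> v = p u"
  by (metis good_D)

lemma good_pj:
  assumes n: "even n" and j: "1 \<le> j" "2*j+1 < n"
  shows "good n (pj j)"
  unfolding good_def
proof (intro allI impI conjI)
  fix v assume v: "v < n"
  have gp: "pm v < n" "pm v \<noteq> v" "pm (pm v) = v" using good_D[OF good_pm[OF n] v] by auto
  show "pj j v < n" using j v gp by (simp add: pj_def)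
  show "pj j v \<noteq> v" using j gp by (simp add: pj_def)
  show "pj j (pj j v) = v"
  proof (cases "v = 0 \<or> v = 1 \<or> v = 2*j \<or> v = 2*j+1")
    case True then show ?thesis using j by (auto simp: pj_def)
  next
    case False
    then have "pm v \<noteq> 0" "pm v \<noteq> 1" "pm v \<noteq> 2*j" "pm v \<noteq> 2*j+1"
      using pm_j[of v j] pm_ge2[of v] by auto
    then show ?thesis using False gp by (simp add: pj_def)
  qed
qed

lemma cfilt_set: "set (cfilt n v) = {u. u < n \<and> u \<noteq> v \<and> u \<noteq> pm v}"
  unfolding cfilt_def by auto

lemma cp_adj: "adj (cpg n p) v = map (\<lambda>u. if u = p v then pm v else u) (cfilt n v)"
  unfolding cpg_def graph.select_convs by (rule refl)

lemma cp_nv[simp]: "nv (cpg n p) = n"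
  unfolding cpg_def graph.select_convs by (rule refl)

lemma cp_set:
  assumes gp: "good n p" and n: "even n" and v: "v < n"
  shows "set (adj (cpg n p) v) = {u. u < n \<and> u \<noteq> v \<and> u \<noteq> p v}"
proof -
  have a: "p v < n" "p v \<noteq> v" using good_D[OF gp v] by auto
  have b: "pm v < n" "pm v \<noteq> v" using good_D[OF good_pm[OF n] v] by auto
  show ?thesis
  proof (rule Set.set_eqI)
    fix w
    show "w \<in> set (adj (cpg n p) v) \<longleftrightarrow> w \<in> {u. u < n \<and> u \<noteq> v \<and> u \<noteq> p v}"
    proof
      assume "w \<in> set (adj (cpg n p) v)"
      then obtain u where u: "u \<in> set (cfilt n v)" "w = (if u = p v then pm v else u)"
        unfolding cp_adj by auto
      then show "w \<in> {u. u < n \<and> u \<noteq> v \<and> u \<noteq> p v}"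
        using a b by (cases "u = p v") (auto simp: cfilt_set)
    next
      assume w: "w \<in> {u. u < n \<and> u \<noteq> v \<and> u \<noteq> p v}"
      show "w \<in> set (adj (cpg n p) v)"
      proof (cases "w = pm v")
        case True
        then have "p v \<in> set (cfilt n v)" using a w by (auto simp: cfilt_set)
        then have "pm v \<in> (\<lambda>u. if u = p v then pm v else u) ` set (cfilt n v)"
          by (intro image_eqI[where x="p v"]) auto
        then show ?thesis using True unfolding cp_adj set_map by simp
      next
        case False
        then have "w \<in> set (cfilt n v)" using w by (auto simp: cfilt_set)
        then have "w \<in> (\<lambda>u. if u = p v then pm v else u) ` set (cfilt n v)"
          using w by (intro image_eqI[where x="w"]) auto
        then show ?thesis unfolding cp_adj set_map by simp
      qed
    qed
  qed
qed

lemma cp_distinct: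
  assumes v: "v < n"
  shows "distinct (adj (cpg n p) v)"
proof -
  have "inj_on (\<lambda>u. if u = p v then pm v else u) (set (cfilt n v))"
    unfolding inj_on_def cfilt_set by auto
  moreover have "distinct (cfilt n v)" by (simp add: cfilt_def)
  ultimately show ?thesis unfolding cp_adj by (simp add: distinct_map)
qed

lemma cp_deg:
  assumes gp: "good n p" and n: "even n" and v: "v < n"
  shows "deg (cpg n p) v = n - 2"
proof -
  have a: "p v < n" "p v \<noteq> v" using good_D[OF gp v] by auto
  have e: "{u. u < n \<and> u \<noteq> v \<and> u \<noteq> p v} = {..<n} - {v, p v}" by auto
  have "card ({..<n} - {v, p v}) = n - 2"
    using a v by (subst card_Diff_subset) auto
  then have "card (set (adj (cpg n p) v)) = n - 2"
    using cp_set[OF gp n v] e by simp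
  then show ?thesis using distinct_card[OF cp_distinct[OF v]] v
    by (simp add: deg_def)
qed

lemma cp_valid:
  assumes gp: "good n p" and n: "even n"
  shows "valid_graph (cpg n p)"
  unfolding valid_graph_def cp_nv
proof (intro allI impI conjI)
  fix v assume v: "v < n"
  show "distinct (adj (cpg n p) v)" by (rule cp_distinct[OF v])
  show "v \<notin> set (adj (cpg n p) v)" using cp_set[OF gp n v] by simp
  show "set (adj (cpg n p) v) \<subseteq> {..<n}" using cp_set[OF gp n v] by auto
  fix u assume u: "u < n"
  show "u \<in> set (adj (cpg n p) v) \<longleftrightarrow> v \<in> set (adj (cpg n p) u)"
    unfolding cp_set[OF gp n v] cp_set[OF gp n u] using good_iff[OF gp u v] u v by blast
qed

definition cl :: "nat \<Rightarrow> (nat \<Rightarrow> nat) \<Rightarrow> nat \<times> nat \<Rightarrow> real" where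
  "cl n p = (\<lambda>(i,j). (real n - 1) * (if i = j then 1 else 0) - 1 + (if j = p i then 1 else 0))"
definition cm :: "nat \<Rightarrow> (nat \<Rightarrow> nat) \<Rightarrow> nat \<times> nat \<Rightarrow> real" where
  "cm n p = (\<lambda>(i,j). ((real n - 1) * (if i = j then 1 else 0) - (if j = p i then 1 else 0))
                     / (real n * (real n - 2)) - 1 / (real n)^2)"

lemma cp_lap:
  assumes gp: "good n p" and n: "even n" "2 \<le> n"
  shows "laplacian (cpg n p) = mat n n (cl n p)"
proof (rule eq_matI)
  fix i j assume ij: "i < dim_row (mat n n (cl n p))" "j < dim_col (mat n n (cl n p))"
  then have i: "i < n" and j: "j < n" by auto
  have pi: "p i \<noteq> i" using good_D[OF gp i] by auto
  show "laplacian (cpg n p) $$ (i, j) = mat n n (cl n p) $$ (i, j)"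
  proof (cases "i = j")
    case True
    then show ?thesis using i j pi n cp_deg[OF gp n(1) i]
      by (simp add: laplacian_def cl_def of_nat_diff)
  next
    case False
    then show ?thesis using i j cp_set[OF gp n(1) i]
      by (simp add: laplacian_def cl_def)
  qed
qed (auto simp: laplacian_def)

lemma sum3:
  assumes "i < (n::nat)" "q < n"
  shows "(\<Sum>k<n. ((a::real) * (if i = k then 1 else 0) - 1 + (if k = q then 1 else 0)) * y k)
       = a * y i + y q - (\<Sum>k<n. y k)"
proof -
  have "(\<Sum>k<n. (a * (if i = k then 1 else 0) - 1 + (if k = q then 1 else 0)) * y k)
      = (\<Sum>k<n. (if i = k then a * y k else 0) + (if k = q then y k else 0) - y k)"
    by (rule sum.cong) (auto simp: algebra_simps)
  also have "\<dots> = a * y i + y q - (\<Sum>k<n. y k)"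
    using assms by (simp add: sum.distrib sum_subtractf sum.delta sum.delta')
  finally show ?thesis .
qed

lemma sum_aff:
  "(\<Sum>k<n. ((b::real) * f k - g k) / a - c) = (b * (\<Sum>k<n. f k) - (\<Sum>k<n. g k)) / a - real n * c"
  by (simp add: sum_subtractf sum_divide_distrib[symmetric] sum_distrib_left)

lemma cm_colsum:
  assumes gp: "good n p" and n: "4 \<le> n" and j: "j < n"
  shows "(\<Sum>k<n. cm n p (k,j)) = 0"
proof -
  have s1: "(\<Sum>k<n. (if k = j then 1 else 0)::real) = 1" using j by simp
  have "(\<Sum>k<n. (if j = p k then 1 else 0)::real) = (\<Sum>k<n. (if k = p j then 1 else 0))"
    by (rule sum.cong) (use good_iff[OF gp _ j] in auto)
  also have "\<dots> = 1" using good_D[OF gp j] by simp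
  finally have s2: "(\<Sum>k<n. (if j = p k then 1 else 0)::real) = 1" .
  have "(\<Sum>k<n. cm n p (k,j)) = ((real n - 1) * 1 - 1) / (real n * (real n - 2)) - real n * (1 / (real n)^2)"
    unfolding cm_def using sum_aff[of "real n - 1" "\<lambda>k. if k = j then 1 else 0" "\<lambda>k. if j = p k then 1 else 0"
        "real n * (real n - 2)" "1 / (real n)^2" n] s1 s2
    by simp
  also have "\<dots> = 0" using n by (simp add: field_simps power2_eq_square)
  finally show ?thesis .
qed

lemma r1: "(x::real) \<ge> 4 \<Longrightarrow> (x-1)*((x-1)/(x*(x-2)) - 1/x^2) + (-1/(x*(x-2)) - 1/x^2) = 1 - 1/x"
proof -
  assume x: "x \<ge> 4"
  define u where "u = 1/(x*(x-2))"
  define w where "w = 1/x"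
  have hu: "x*(x-2)*u = 1" using x unfolding u_def by simp
  have hw: "x*w = 1" using x unfolding w_def by simp
  have "(x-1)*((x-1)*u - w^2) + (-u - w^2) = x*(x-2)*u - w*(x*w)" by (simp add: algebra_simps power2_eq_square)
  also have "\<dots> = 1 - w" using hu hw by simp
  finally have "(x-1)*((x-1)*u - w^2) + (-u - w^2) = 1 - w" .
  then show ?thesis unfolding u_def w_def by (simp add: power_one_over divide_inverse power_inverse)
qed

lemma r2: "(x::real) \<ge> 4 \<Longrightarrow> (x-1)*(-1/(x*(x-2)) - 1/x^2) + ((x-1)/(x*(x-2)) - 1/x^2) = - (1/x)"
proof -
  assume x: "x \<ge> 4"
  define u where "u = 1/(x*(x-2))"
  define w where "w = 1/x"
  have hw: "x*w = 1" using x unfolding w_def by simp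
  have "(x-1)*(-u - w^2) + ((x-1)*u - w^2) = - (w*(x*w))" by (simp add: algebra_simps power2_eq_square)
  also have "\<dots> = - w" using hw by simp
  finally have "(x-1)*(-u - w^2) + ((x-1)*u - w^2) = - w" .
  then show ?thesis unfolding u_def w_def by (simp add: power_one_over divide_inverse power_inverse)
qed

lemma r3: "(x::real) \<ge> 4 \<Longrightarrow> (x-1)*(- (1/x^2)) + (- (1/x^2)) = - (1/x)"
proof -
  assume x: "x \<ge> 4"
  define w where "w = 1/x"
  have hw: "x*w = 1" using x unfolding w_def by simp
  have "(x-1)*(- (w^2)) + (- (w^2)) = - (w*(x*w))" by (simp add: algebra_simps power2_eq_square)
  also have "\<dots> = - w" using hw by simp
  finally have "(x-1)*(- (w^2)) + (- (w^2)) = - w" .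
  then show ?thesis unfolding w_def by (simp add: power_one_over divide_inverse power_inverse)
qed

lemma cp_prod:
  assumes gp: "good n p" and n: "4 \<le> n" and i: "i < n" and j: "j < n"
  shows "(\<Sum>k<n. cl n p (i,k) * cm n p (k,j)) = (if i = j then 1 else 0) - 1 / real n"
proof -
  have pi: "p i < n" "p i \<noteq> i" "p (p i) = i" using good_D[OF gp i] by auto
  have x: "real n \<ge> 4" using n by simp
  have "(\<Sum>k<n. cl n p (i,k) * cm n p (k,j))
      = (real n - 1) * cm n p (i,j) + cm n p (p i, j) - (\<Sum>k<n. cm n p (k,j))"
    unfolding cl_def using sum3[OF i pi(1), of "real n - 1" "\<lambda>k. cm n p (k,j)"] by simp
  also have "\<dots> = (real n - 1) * cm n p (i,j) + cm n p (p i, j)"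
    using cm_colsum[OF gp n j] by simp
  also have "\<dots> = (if i = j then 1 else 0) - 1 / real n"
  proof -
    consider "i = j" | "j = p i" | "i \<noteq> j" "j \<noteq> p i" by blast
    then show ?thesis
    proof cases
      case 1
      have "cm n p (i,j) = (real n-1)/(real n*(real n-2)) - 1/(real n)^2"
        using 1 pi unfolding cm_def by simp
      moreover have "cm n p (p i,j) = -1/(real n*(real n-2)) - 1/(real n)^2"
        using 1 pi unfolding cm_def by simp
      ultimately show ?thesis using r1[OF x] 1 by simp
    next
      case 2
      have "cm n p (i,j) = -1/(real n*(real n-2)) - 1/(real n)^2"
        using 2 pi unfolding cm_def by auto
      moreover have "cm n p (p i,j) = (real n-1)/(real n*(real n-2)) - 1/(real n)^2"
        using 2 pi unfolding cm_def by auto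
      ultimately show ?thesis using r2[OF x] 2 pi by auto
    next
      case 3
      then have "p i \<noteq> j" "j \<noteq> p (p i)" using pi by auto
      have "cm n p (i,j) = - (1/(real n)^2)"
        using 3 pi unfolding cm_def by auto
      moreover have "cm n p (p i,j) = - (1/(real n)^2)"
        using 3 pi \<open>p i \<noteq> j\<close> \<open>j \<noteq> p (p i)\<close> unfolding cm_def by auto
      ultimately show ?thesis using r3[OF x] 3 by simp
    qed
  qed
  finally show ?thesis .
qed

lemma cp_pinv:
  assumes gp: "good n p" and n: "even n" "4 \<le> n"
  shows "pinv (laplacian (cpg n p)) = mat n n (cm n p)"
proof -
  have v: "valid_graph (cpg n p)" by (rule cp_valid[OF gp n(1)])
  have L: "laplacian (cpg n p) \<in> carrier_mat n n" using lap_carrier[of "cpg n p"] by simp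
  show ?thesis
  proof (rule pinv_eq[OF L], rule pinv_suff[OF L])
    show "mat n n (cm n p) \<in> carrier_mat n n" by simp
    show "transpose_mat (laplacian (cpg n p)) = laplacian (cpg n p)" by (rule lap_sym[OF v])
    show "transpose_mat (mat n n (cm n p)) = mat n n (cm n p)"
    proof (rule eq_matI)
      fix i j assume "i < dim_row (mat n n (cm n p))" "j < dim_col (mat n n (cm n p))"
      then have i: "i < n" and j: "j < n" by auto
      have e: "j = p i \<longleftrightarrow> i = p j" using good_iff[OF gp j i] .
      show "transpose_mat (mat n n (cm n p)) $$ (i, j) = mat n n (cm n p) $$ (i, j)"
      proof (cases "j = p i")
        case True
        then have "i = p j" using e by blast
        then show ?thesis using i j True by (simp add: cm_def)
      next
        case False
        then have "i \<noteq> p j" using e by blast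
        then show ?thesis using i j False by (simp add: cm_def)
      qed
    qed auto
    have lapeq: "laplacian (cpg n p) = mat n n (cl n p)" using cp_lap[OF gp n(1)] n by simp
    show "laplacian (cpg n p) * mat n n (cm n p) = PI n"
      unfolding lapeq mat_mult_mat PI_def
      by (rule eq_matI) (auto simp: cp_prod[OF gp n(2)])
    show "PI n * laplacian (cpg n p) = laplacian (cpg n p)"
      using PI_lap[OF v] by simp
    show "PI n * mat n n (cm n p) = mat n n (cm n p)"
      by (rule PI_mult) (use cm_colsum[OF gp n(2)] in simp)
  qed
qed

lemma cp_eff:
  assumes gp: "good n p" and n: "even n" "4 \<le> n"
  shows "eff_res (cpg n p) 0 1 = (if p 0 = 1 then 2 / (real n - 2) else 2 * (real n - 1) / (real n * (real n - 2)))"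
proof -
  have 0: "0 < n" "1 < n" using n by auto
  have p0: "p 0 \<noteq> 0" using good_D[OF gp 0(1)] by auto
  have p1e: "0 = p 1 \<longleftrightarrow> 1 = p 0" using good_iff[OF gp 0(1) 0(2)] .
  have nz: "real n * (real n - 2) \<noteq> 0" "real n - 2 \<noteq> 0" using n by auto
  have "eff_res (cpg n p) 0 1 = cm n p (0,0) - cm n p (0,1) - cm n p (1,0) + cm n p (1,1)"
    by (rule eff_res_mat) (use cp_pinv[OF gp n] 0 in auto)
  also have "\<dots> = (if p 0 = 1 then 2 / (real n - 2) else 2 * (real n - 1) / (real n * (real n - 2)))"
  proof -
    define d where "d = real n * (real n - 2)"
    define w where "w = 1 / (real n)^2"
    have dnz: "d \<noteq> 0" using nz unfolding d_def by simp
    have c00: "cm n p (0,0) = (real n - 1) / d - w" and c11: "cm n p (1,1) = (real n - 1) / d - w"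
      using p0 good_D[OF gp 0(2)] unfolding cm_def d_def w_def by auto
    show ?thesis
    proof (cases "p 0 = 1")
      case True
      then have "p 1 = 0" using p1e by simp
      then have "cm n p (0,1) = -1/d - w" "cm n p (1,0) = -1/d - w"
        using True unfolding cm_def d_def w_def by auto
      then have "cm n p (0,0) - cm n p (0,1) - cm n p (1,0) + cm n p (1,1) = 2 * real n / d"
        using c00 c11 dnz by (simp add: field_simps)
      also have "\<dots> = 2 / (real n - 2)" using nz unfolding d_def by (simp add: field_simps)
      finally show ?thesis using True by simp
    next
      case False
      then have "p 1 \<noteq> 0" using p1e by auto
      then have "cm n p (0,1) = - w" "cm n p (1,0) = - w"
        using False unfolding cm_def d_def w_def by auto
      then have "cm n p (0,0) - cm n p (0,1) - cm n p (1,0) + cm n p (1,1) = 2 * (real n - 1) / d"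
        using c00 c11 dnz by (simp add: field_simps)
      then show ?thesis using False unfolding d_def by simp
    qed
  qed
  finally show ?thesis .
qed

lemma cond_ge:
  assumes n: "2 \<le> nv G"
    and H: "\<And>S. S \<subseteq> {..<nv G} \<Longrightarrow> S \<noteq> {} \<Longrightarrow> S \<noteq> {..<nv G} \<Longrightarrow>
              c \<le> real (cut_size G S) / min (vol G S) (vol G ({..<nv G} - S))"
  shows "c \<le> conductance G"
proof -
  define F where "F = (\<lambda>S. real (cut_size G S) / min (vol G S) (vol G ({..<nv G} - S)))"
  define P where "P = (\<lambda>S. S \<subseteq> {..<nv G} \<and> S \<noteq> {} \<and> S \<noteq> {..<nv G})"
  have eq: "{real (cut_size G S) / min (vol G S) (vol G ({..<nv G} - S)) | S.
      S \<subseteq> {..<nv G} \<and> S \<noteq> {} \<and> S \<noteq> {..<nv G}} = F ` {S. P S}"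
    unfolding F_def P_def by blast
  have fin: "finite {S. P S}"
    by (rule finite_subset[of _ "Pow {..<nv G}"]) (unfold P_def, blast, simp)
  have ne: "{S. P S} \<noteq> {}"
  proof -
    have "1 \<in> {..<nv G}" "1 \<notin> {0::nat}" using n by auto
    then have "{0} \<noteq> {..<nv G}" by blast
    then have "P {0}" using n unfolding P_def by simp
    then show ?thesis by blast
  qed
  have all: "\<And>y. y \<in> F ` {S. P S} \<Longrightarrow> c \<le> y"
  proof -
    fix y assume "y \<in> F ` {S. P S}"
    then obtain S where "P S" "y = F S" by blast
    then show "c \<le> y" using H unfolding P_def F_def by blast
  qed
  show ?thesis
    unfolding conductance_def eq
    by (rule Min.boundedI) (use fin ne all in blast)+
qed
lemma ratio_ge:
  assumes "0 < a" "0 < b" "(c::real) * a \<le> x \<or> c * b \<le> x" "0 \<le> c"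
  shows "c \<le> x / min a b"
proof -
  have "c * min a b \<le> x"
  proof -
    have "c * min a b \<le> c * a" "c * min a b \<le> c * b"
      using mult_left_mono[OF min.cobounded1 assms(4)] mult_left_mono[OF min.cobounded2 assms(4)] by auto
    then show ?thesis using assms(3) by linarith
  qed
  moreover have "0 < min a b" using assms by simp
  ultimately show ?thesis by (simp add: pos_le_divide_eq)
qed

lemma cp_cut:
  assumes gp: "good n p" and n: "even n" and S: "S \<subseteq> {..<n}"
  shows "real (cut_size (cpg n p) S) = real (card S) * real (n - card S) - real (card {u\<in>S. p u \<notin> S})"
proof -
  have finS: "finite S" using S finite_subset by blast
  have eqset: "{(u, v). u \<in> S \<and> v \<in> {..<nv (cpg n p)} - S \<and> v \<in> set (adj (cpg n p) u)}
      = Sigma S (\<lambda>u. ({..<n} - S) - {p u})"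
  proof -
    have "\<And>u. u \<in> S \<Longrightarrow> set (adj (cpg n p) u) = {w. w < n \<and> w \<noteq> u \<and> w \<noteq> p u}"
      using cp_set[OF gp n] S by auto
    then show ?thesis by auto
  qed
  have cS: "card ({..<n} - S) = n - card S" using S by (simp add: card_Diff_subset finS)
  have "real (cut_size (cpg n p) S) = (\<Sum>u\<in>S. real (card (({..<n} - S) - {p u})))"
    unfolding cut_size_def eqset using finS by (simp add: card_SigmaI)
  also have "\<dots> = (\<Sum>u\<in>S. real (n - card S) - (if p u \<notin> S then 1 else 0))"
  proof (rule sum.cong)
    fix u assume u: "u \<in> S"
    have pu: "p u < n" using good_D[OF gp, of u] u S by auto
    show "real (card (({..<n} - S) - {p u})) = real (n - card S) - (if p u \<notin> S then 1 else 0)"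
    proof (cases "p u \<in> S")
      case True then show ?thesis using cS by simp
    next
      case False
      then have "p u \<in> {..<n} - S" using pu by auto
      then have "card ({..<n} - S) \<ge> 1"
        by (metis One_nat_def Suc_leI card_gt_0_iff empty_iff finite_Diff finite_lessThan)
      then show ?thesis using False cS pu by (simp add: card_Diff_singleton_if of_nat_diff)
    qed
  qed simp
  also have "\<dots> = real (card S) * real (n - card S) - real (card {u\<in>S. p u \<notin> S})"
  proof -
    have e: "{u\<in>S. p u \<notin> S} = S \<inter> {u. p u \<notin> S}" by blast
    have "(\<Sum>u\<in>S. (if p u \<notin> S then 1 else 0)::real) = real (card {u\<in>S. p u \<notin> S})"
      unfolding e using finS by (simp add: sum.If_cases)
    then show ?thesis by (simp add: sum_subtractf)
  qed
  finally show ?thesis .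
qed

lemma cp_out_le:
  assumes gp: "good n p" and S: "S \<subseteq> {..<n}"
  shows "card {u\<in>S. p u \<notin> S} \<le> n - card S" "card {u\<in>S. p u \<notin> S} \<le> card S"
proof -
  have finS: "finite S" using S finite_subset by blast
  have "inj_on p {u\<in>S. p u \<notin> S}"
    unfolding inj_on_def using S by (metis (no_types, lifting) good_D[OF gp] mem_Collect_eq subsetD lessThan_iff)
  moreover have "p ` {u\<in>S. p u \<notin> S} \<subseteq> {..<n} - S" using S good_D[OF gp] by auto
  ultimately have "card {u\<in>S. p u \<notin> S} \<le> card ({..<n} - S)"
    by (intro card_inj_on_le) auto
  then show "card {u\<in>S. p u \<notin> S} \<le> n - card S" using S by (simp add: card_Diff_subset finS)
  show "card {u\<in>S. p u \<notin> S} \<le> card S" using finS by (intro card_mono) auto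
qed

lemma cp_vol:
  assumes gp: "good n p" and n: "even n" "2 \<le> n" and S: "S \<subseteq> {..<n}"
  shows "vol (cpg n p) S = real (card S) * (real n - 2)"
proof -
  have "vol (cpg n p) S = (\<Sum>u\<in>S. real n - 2)"
    unfolding vol_def using S cp_deg[OF gp n(1)] n(2) by (intro sum.cong) (auto simp: of_nat_diff)
  then show ?thesis by simp
qed

lemma cp_expander:
  assumes gp: "good n p" and n: "even n" "4 \<le> n"
  shows "expander (1/4) (cpg n p)"
  unfolding expander_def
proof
  show "2 \<le> nv (cpg n p)" using n by simp
  show "1/4 \<le> conductance (cpg n p)"
  proof (rule cond_ge)
    show "2 \<le> nv (cpg n p)" using n by simp
    fix S assume S: "S \<subseteq> {..<nv (cpg n p)}" "S \<noteq> {}" "S \<noteq> {..<nv (cpg n p)}"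
    then have S': "S \<subseteq> {..<n}" by simp
    have finS: "finite S" using S' finite_subset by blast
    define k where "k = card S"
    have k1: "1 \<le> k" using S finS unfolding k_def by (simp add: Suc_le_eq card_gt_0_iff)
    have kn: "k < n" using S' S(3) unfolding k_def
      by (metis card_lessThan cp_nv finite_lessThan psubsetI psubset_card_mono)
    have Sc: "{..<n} - S \<subseteq> {..<n}" by auto
    have cSc: "card ({..<n} - S) = n - k" using S' finS unfolding k_def by (simp add: card_Diff_subset)
    have cut: "real (cut_size (cpg n p) S) = real k * real (n - k) - real (card {u\<in>S. p u \<notin> S})"
      using cp_cut[OF gp n(1) S'] unfolding k_def .
    have t1: "card {u\<in>S. p u \<notin> S} \<le> n - k" and t2: "card {u\<in>S. p u \<notin> S} \<le> k"
      using cp_out_le[OF gp S'] unfolding k_def by auto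
    have vS: "vol (cpg n p) S = real k * (real n - 2)"
      using cp_vol[OF gp n(1) _ S'] n unfolding k_def by simp
    have vSc: "vol (cpg n p) ({..<n} - S) = real (n - k) * (real n - 2)"
      using cp_vol[OF gp n(1) _ Sc] n cSc by simp
    have rnk: "real (n - k) = real n - real k" using kn by simp
    have "(1/4) * vol (cpg n p) S \<le> real (cut_size (cpg n p) S) \<or>
          (1/4) * vol (cpg n p) ({..<n} - S) \<le> real (cut_size (cpg n p) S)"
    proof (cases "2 * k \<le> n")
      case True
      have "real (2*k) \<le> real n" using True by (simp only: of_nat_le_iff)
      then have a: "real n - 2 \<le> 4 * (real n - real k - 1)" using n by simp
      have "(1/4) * (real k * (real n - 2)) \<le> real k * (real n - real k - 1)"
        using mult_left_mono[OF a, of "real k"] by (simp add: algebra_simps)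
      also have "\<dots> \<le> real (cut_size (cpg n p) S)"
        using cut t2 rnk by (simp add: algebra_simps)
      finally show ?thesis using vS by simp
    next
      case False
      have "real n < real (2*k)" using False by (simp only: of_nat_less_iff not_le)
      then have a: "real n - 2 \<le> 4 * (real k - 1)" using n by simp
      have "(1/4) * ((real n - real k) * (real n - 2)) \<le> (real n - real k) * (real k - 1)"
        using mult_left_mono[OF a, of "real n - real k"] kn by (simp add: algebra_simps)
      also have "\<dots> \<le> real (cut_size (cpg n p) S)"
        using cut t1 rnk kn by (simp add: algebra_simps of_nat_diff)
      finally show ?thesis using vSc rnk by simp
    qed
    moreover have "0 < vol (cpg n p) S" using vS k1 n by simp
    moreover have "0 < vol (cpg n p) ({..<n} - S)" using vSc kn n by simp
    ultimately show "1/4 \<le> real (cut_size (cpg n p) S) / min (vol (cpg n p) S) (vol (cpg n p) ({..<nv (cpg n p)} - S))"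
      using ratio_ge by simp
  qed
qed

definition starg :: "nat \<Rightarrow> graph" where
  "starg m = \<lparr>nv = Suc m, adj = (\<lambda>v. if v = m then [0..<m] else [m])\<rparr>"

lemma st_adj: "adj (starg m) v = (if v = m then [0..<m] else [m])"
  unfolding starg_def graph.select_convs by (rule refl)

lemma st_nv[simp]: "nv (starg m) = Suc m"
  unfolding starg_def graph.select_convs by (rule refl)

lemma st_set: "set (adj (starg m) v) = (if v = m then {..<m} else {m})"
  unfolding st_adj by auto

lemma st_deg: "v < Suc m \<Longrightarrow> deg (starg m) v = (if v = m then m else 1)"
  unfolding deg_def st_adj by simp

lemma st_valid: "valid_graph (starg m)"
  unfolding valid_graph_def st_nv
proof (intro allI impI conjI)
  fix v assume v: "v < Suc m"
  show "distinct (adj (starg m) v)" unfolding st_adj by simp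
  show "v \<notin> set (adj (starg m) v)" unfolding st_set by simp
  show "set (adj (starg m) v) \<subseteq> {..<Suc m}" unfolding st_set by auto
  fix u assume u: "u < Suc m"
  show "u \<in> set (adj (starg m) v) \<longleftrightarrow> v \<in> set (adj (starg m) u)"
    unfolding st_set using u v by auto
qed

definition sl :: "nat \<Rightarrow> nat \<times> nat \<Rightarrow> real" where
  "sl m = (\<lambda>(i,k). if i = m then real (Suc m) * (if k = m then 1 else 0) - 1
                    else (if k = i then 1 else 0) - (if k = m then 1 else 0))"

definition sm :: "nat \<Rightarrow> nat \<times> nat \<Rightarrow> real" where
  "sm m = (\<lambda>(i,j). if i = m then (if j = m then real m / (real (Suc m))^2 else - (1 / (real (Suc m))^2))
                    else if j = m then - (1 / (real (Suc m))^2)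
                    else (if i = j then 1 else 0) - 1 / real m + 1 / (real m * (real (Suc m))^2))"

lemma st_lap: "laplacian (starg m) = mat (Suc m) (Suc m) (sl m)"
proof (rule eq_matI)
  fix i j assume "i < dim_row (mat (Suc m) (Suc m) (sl m))" "j < dim_col (mat (Suc m) (Suc m) (sl m))"
  then have i: "i < Suc m" and j: "j < Suc m" by auto
  show "laplacian (starg m) $$ (i, j) = mat (Suc m) (Suc m) (sl m) $$ (i, j)"
    using i j by (auto simp: laplacian_def sl_def st_deg st_set)
qed (auto simp: laplacian_def)

lemma st_colsum:
  assumes m: "2 \<le> m" and j: "j < Suc m"
  shows "(\<Sum>k<Suc m. sm m (k,j)) = 0"
proof (cases "j = m")
  case True
  have "(\<Sum>k<Suc m. sm m (k,j)) = (\<Sum>k<m. - (1 / (real (Suc m))^2)) + real m / (real (Suc m))^2"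
    using True by (simp add: sm_def)
  also have "\<dots> = 0" by simp
  finally show ?thesis .
next
  case False
  then have jm: "j < m" using j by simp
  define w where "w = 1 / (real (Suc m))^2"
  have "(\<Sum>k<Suc m. sm m (k,j)) = (\<Sum>k<m. (if k = j then 1 else 0) - 1 / real m + 1 / real m * w) - w"
    using False unfolding w_def by (simp add: sm_def)
  also have "\<dots> = 1 - real m * (1 / real m) + real m * (1 / real m) * w - w"
    using jm by (simp add: sum.distrib sum_subtractf)
  also have "\<dots> = 0" using m by simp
  finally show ?thesis .
qed

lemma st_prod:
  assumes m: "2 \<le> m" and i: "i < Suc m" and j: "j < Suc m"
  shows "(\<Sum>k<Suc m. sl m (i,k) * sm m (k,j)) = (if i = j then 1 else 0) - 1 / real (Suc m)"
proof -
  define N where "N = real (Suc m)"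
  have N: "real m = N - 1" "N \<noteq> 0" unfolding N_def by auto
  show ?thesis
  proof (cases "i = m")
    case True
    have "(\<Sum>k<Suc m. sl m (i,k) * sm m (k,j)) = (\<Sum>k<Suc m. (if k = m then N * sm m (k,j) else 0) - sm m (k,j))"
      using True unfolding N_def by (intro sum.cong) (auto simp: sl_def algebra_simps)
    also have "\<dots> = N * sm m (m,j)"
      using st_colsum[OF m j] by (simp add: sum_subtractf)
    also have "\<dots> = (if i = j then 1 else 0) - 1 / real (Suc m)"
    proof (cases "j = m")
      case True
      then have "N * sm m (m,j) = real m / N" using N unfolding sm_def N_def by (simp add: power2_eq_square)
      also have "\<dots> = (N - 1) / N" using N by simp
      also have "\<dots> = 1 - 1 / N" using N by (simp add: diff_divide_distrib)
      finally show ?thesis using True \<open>i = m\<close> unfolding N_def by simp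
    next
      case False
      then have "N * sm m (m,j) = - (1 / N)" using N unfolding sm_def N_def by (simp add: power2_eq_square)
      then show ?thesis using False \<open>i = m\<close> unfolding N_def by simp
    qed
    finally show ?thesis .
  next
    case False
    then have im: "i < m" using i by simp
    have "(\<Sum>k<Suc m. sl m (i,k) * sm m (k,j)) = (\<Sum>k<Suc m. (if k = i then sm m (k,j) else 0) - (if k = m then sm m (k,j) else 0))"
      using False by (intro sum.cong) (auto simp: sl_def)
    also have "\<dots> = sm m (i,j) - sm m (m,j)"
      using i by (simp add: sum_subtractf)
    also have "\<dots> = (if i = j then 1 else 0) - 1 / real (Suc m)"
    proof (cases "j = m")
      case True
      then have "sm m (i,j) - sm m (m,j) = - (1 / N^2) - real m / N^2" using im unfolding sm_def N_def by simp
      also have "\<dots> = - (1 / N)" unfolding N(1) using N(2) by (simp add: field_simps power2_eq_square)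
      finally show ?thesis using True im unfolding N_def by simp
    next
      case False
      have mz: "real m \<noteq> 0" using m by simp
      have "sm m (i,j) - sm m (m,j) = (if i = j then 1 else 0) - (1 / real m - 1 / (real m * N^2) - 1 / N^2)"
        using False im unfolding sm_def N_def by simp
      also have "1 / real m - 1 / (real m * N^2) - 1 / N^2 = 1 / N"
      proof -
        have "1 / real m - 1 / (real m * N^2) - 1 / N^2 = (N^2 - 1 - real m) / (real m * N^2)"
          using mz N(2) by (simp add: field_simps)
        also have "N^2 - 1 - real m = real m * N" unfolding N(1) by (simp add: power2_eq_square algebra_simps)
        also have "real m * N / (real m * N^2) = 1 / N" using mz N by (simp add: power2_eq_square)
        finally show ?thesis .
      qed
      finally show ?thesis unfolding N_def by simp
    qed
    finally show ?thesis .
  qed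
qed

lemma st_pinv:
  assumes m: "2 \<le> m"
  shows "pinv (laplacian (starg m)) = mat (Suc m) (Suc m) (sm m)"
proof -
  have v: "valid_graph (starg m)" by (rule st_valid)
  have L: "laplacian (starg m) \<in> carrier_mat (Suc m) (Suc m)" using lap_carrier[of "starg m"] by simp
  show ?thesis
  proof (rule pinv_eq[OF L], rule pinv_suff[OF L])
    show "mat (Suc m) (Suc m) (sm m) \<in> carrier_mat (Suc m) (Suc m)" by simp
    show "transpose_mat (laplacian (starg m)) = laplacian (starg m)" by (rule lap_sym[OF v])
    show "transpose_mat (mat (Suc m) (Suc m) (sm m)) = mat (Suc m) (Suc m) (sm m)"
      by (rule eq_matI) (auto simp: sm_def)
    show "laplacian (starg m) * mat (Suc m) (Suc m) (sm m) = PI (Suc m)"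
      unfolding st_lap mat_mult_mat PI_def
    proof (rule eq_matI)
      fix i j assume "i < dim_row (mat (Suc m) (Suc m) (\<lambda>(i, j). (if i = j then 1 else 0) - 1 / real (Suc m)))"
        "j < dim_col (mat (Suc m) (Suc m) (\<lambda>(i, j). (if i = j then 1 else 0) - 1 / real (Suc m)))"
      then have i: "i < Suc m" and j: "j < Suc m" by auto
      have "mat (Suc m) (Suc m) (\<lambda>(i, j). \<Sum>k<Suc m. sl m (i, k) * sm m (k, j)) $$ (i, j)
          = (\<Sum>k<Suc m. sl m (i, k) * sm m (k, j))" using i j by simp
      also have "\<dots> = (if i = j then 1 else 0) - 1 / real (Suc m)" by (rule st_prod[OF m i j])
      also have "\<dots> = mat (Suc m) (Suc m) (\<lambda>(i, j). (if i = j then 1 else 0) - 1 / real (Suc m)) $$ (i, j)"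
        using i j by simp
      finally show "mat (Suc m) (Suc m) (\<lambda>(i, j). \<Sum>k<Suc m. sl m (i, k) * sm m (k, j)) $$ (i, j)
          = mat (Suc m) (Suc m) (\<lambda>(i, j). (if i = j then 1 else 0) - 1 / real (Suc m)) $$ (i, j)" .
    qed auto
    show "PI (Suc m) * laplacian (starg m) = laplacian (starg m)"
      using PI_lap[OF v] by simp
    show "PI (Suc m) * mat (Suc m) (Suc m) (sm m) = mat (Suc m) (Suc m) (sm m)"
      by (rule PI_mult) (use st_colsum[OF m] in simp)
  qed
qed

lemma st_eff:
  assumes m: "2 \<le> m"
  shows "eff_res (starg m) 0 1 = 2"
proof -
  have "eff_res (starg m) 0 1 = sm m (0,0) - sm m (0,1) - sm m (1,0) + sm m (1,1)"
    by (rule eff_res_mat) (use st_pinv[OF m] m in auto)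
  also have "\<dots> = 2" using m unfolding sm_def by simp
  finally show ?thesis .
qed

lemma st_expander:
  assumes m: "2 \<le> m"
  shows "expander (1/4) (starg m)"
  unfolding expander_def
proof
  show "2 \<le> nv (starg m)" using m by simp
  show "1/4 \<le> conductance (starg m)"
  proof (rule cond_ge)
    show "2 \<le> nv (starg m)" using m by simp
    fix S assume S: "S \<subseteq> {..<nv (starg m)}" "S \<noteq> {}" "S \<noteq> {..<nv (starg m)}"
    then have S': "S \<subseteq> {..<Suc m}" by simp
    define Sc where "Sc = {..<Suc m} - S"
    have finS: "finite S" using S' finite_subset by blast
    have finSc: "finite Sc" unfolding Sc_def by simp
    have Scne: "Sc \<noteq> {}" unfolding Sc_def using S' S(3) by auto
    have cutfin: "finite {(u, v). u \<in> S \<and> v \<in> {..<nv (starg m)} - S \<and> v \<in> set (adj (starg m) u)}"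
      by (rule finite_subset[of _ "S \<times> {..<Suc m}"]) (auto simp: finS)
    have vol1: "\<And>A. A \<subseteq> {..<Suc m} \<Longrightarrow> real (card A) \<le> vol (starg m) A"
    proof -
      fix A assume A: "A \<subseteq> {..<Suc m}"
      have "real (card A) = (\<Sum>u\<in>A. 1)" by simp
      also have "\<dots> \<le> vol (starg m) A" unfolding vol_def
        using A m by (intro sum_mono) (auto simp: st_deg)
      finally show "real (card A) \<le> vol (starg m) A" .
    qed
    have "0 < card S" using finS S(2) by (simp add: card_gt_0_iff)
    moreover have "0 < card Sc" using finSc Scne by (simp add: card_gt_0_iff)
    moreover have "real (card Sc) \<le> vol (starg m) Sc" using vol1[of Sc] unfolding Sc_def by simp
    ultimately have pos: "0 < vol (starg m) S" "0 < vol (starg m) Sc"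
      using vol1[OF S'] by linarith+
    have "(1/4) * vol (starg m) S \<le> real (cut_size (starg m) S) \<or>
          (1/4) * vol (starg m) Sc \<le> real (cut_size (starg m) S)"
    proof (cases "m \<in> S")
      case True
      have "vol (starg m) Sc = (\<Sum>u\<in>Sc. 1)" unfolding vol_def Sc_def
        using True by (intro sum.cong) (auto simp: st_deg)
      have vSc: "vol (starg m) Sc = real (card Sc)"
        using \<open>vol (starg m) Sc = (\<Sum>u\<in>Sc. 1)\<close> by simp
      have "{m} \<times> Sc \<subseteq> {(u, v). u \<in> S \<and> v \<in> {..<nv (starg m)} - S \<and> v \<in> set (adj (starg m) u)}"
        using True unfolding Sc_def st_set by (auto simp: less_Suc_eq)
      then have "card ({m} \<times> Sc) \<le> cut_size (starg m) S"
        unfolding cut_size_def by (rule card_mono[OF cutfin])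
      then have "real (card Sc) \<le> real (cut_size (starg m) S)" by (simp add: card_cartesian_product)
      then show ?thesis using vSc pos by auto
    next
      case False
      have vS: "vol (starg m) S = real (card S)" unfolding vol_def
        using False S' by (subst sum.cong[of S S _ "\<lambda>_. 1"]) (auto simp: st_deg)
      have "S \<times> {m} \<subseteq> {(u, v). u \<in> S \<and> v \<in> {..<nv (starg m)} - S \<and> v \<in> set (adj (starg m) u)}"
        using False S' unfolding st_set by auto
      then have "card (S \<times> {m}) \<le> cut_size (starg m) S"
        unfolding cut_size_def by (rule card_mono[OF cutfin])
      then have "real (card S) \<le> real (cut_size (starg m) S)" by (simp add: card_cartesian_product)
      then show ?thesis using vS pos by auto
    qed
    then show "1/4 \<le> real (cut_size (starg m) S) / min (vol (starg m) S) (vol (starg m) ({..<nv (starg m)} - S))"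
      using ratio_ge[OF pos] unfolding Sc_def by simp
  qed
qed

lemma prob_disj_le:
  assumes "X \<inter> Y = {}"
  shows "measure_pmf.prob p X + measure_pmf.prob p Y \<le> 1"
proof -
  have "measure_pmf.prob p X + measure_pmf.prob p Y = measure_pmf.prob p (X \<union> Y)"
    using assms by (subst measure_pmf.finite_measure_Union) simp_all
  also have "\<dots> \<le> 1" by (rule measure_pmf.prob_le_1)
  finally show ?thesis .
qed

definition SS :: "real \<Rightarrow> real \<Rightarrow> real option set" where
  "SS \<epsilon> R = {Some r | r. approx_eq \<epsilon> r R}"

lemma success_SS: "success_prob A G s t \<epsilon> k = measure_pmf.prob (run G A k) (SS \<epsilon> (eff_res G s t))"
  unfolding success_prob_def SS_def ..

lemma SS_disj:
  assumes "(1 + \<epsilon>) * R2 < (1 - \<epsilon>) * R1"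
  shows "SS \<epsilon> R1 \<inter> SS \<epsilon> R2 = {}"
  using assms unfolding SS_def approx_eq_def by force

lemma nbr_diff:
  assumes gp: "good n p" and n: "even n" and d: "nbr (cpg n pm) v i \<noteq> nbr (cpg n p) v i"
  shows "v < n \<and> i < n - 2 \<and> cfilt n v ! i = p v \<and> p v \<noteq> pm v"
proof -
  have vi: "v < n \<and> i < n - 2"
  proof (rule ccontr)
    assume "\<not> (v < n \<and> i < n - 2)"
    then have "nbr (cpg n pm) v i = None" "nbr (cpg n p) v i = None"
      using cp_deg[OF good_pm[OF n] n] cp_deg[OF gp n] unfolding nbr_def by auto
    then show False using d by simp
  qed
  have len: "length (cfilt n v) = n - 2"
    using cp_deg[OF gp n, of v] vi unfolding deg_def cp_adj by simp
  have i: "i < length (cfilt n v)" using len vi by simp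
  have "adj (cpg n pm) v ! i \<noteq> adj (cpg n p) v ! i"
    using d vi cp_deg[OF good_pm[OF n] n, of v] cp_deg[OF gp n, of v] unfolding nbr_def by auto
  then have "cfilt n v ! i \<noteq> (if cfilt n v ! i = p v then pm v else cfilt n v ! i)"
    unfolding cp_adj using i by simp
  then show ?thesis using vi by (auto split: if_splits)
qed

lemma pj_uniq:
  assumes j: "1 \<le> j" "1 \<le> j'" and e: "pj j v = pj j' v" and d: "pj j v \<noteq> pm v"
  shows "j = j'"
proof -
  have v2: "2 \<le> v \<Longrightarrow> pm v \<ge> 2" by (rule pm_ge2)
  consider "v = 0" | "v = 1" | "2 \<le> v" by linarith
  then show ?thesis
  proof cases
    case 1 then show ?thesis using e j by (simp add: pj_def)
  next
    case 2 then show ?thesis using e j by (simp add: pj_def)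
  next
    case 3
    then have "v = 2*j \<or> v = 2*j+1" using d unfolding pj_def by (auto split: if_splits)
    then have a: "pj j v \<le> 1" using j 3 unfolding pj_def by auto
    have "v = 2*j' \<or> v = 2*j'+1"
    proof (rule ccontr)
      assume "\<not> (v = 2*j' \<or> v = 2*j'+1)"
      then have "pj j' v = pm v" using 3 unfolding pj_def by auto
      then show False using a e v2[OF 3] by simp
    qed
    then show ?thesis using \<open>v = 2*j \<or> v = 2*j+1\<close> by auto
  qed
qed

lemma gap_ineq:
  assumes x: "(x::real) \<ge> 4" and e: "0 < \<epsilon>" "\<epsilon> * (2 * x - 1) < 1"
  shows "(1 + \<epsilon>) * (2 * (x - 1) / (x * (x - 2))) < (1 - \<epsilon>) * (2 / (x - 2))"
proof -
  have pos: "0 < x * (x - 2)" using x by simp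
  have "(1 + \<epsilon>) * (2 * (x - 1)) < (1 - \<epsilon>) * (2 * x)"
    using e by (simp add: algebra_simps)
  then have lt: "(1 + \<epsilon>) * (2 * (x - 1)) / (x * (x - 2)) < (1 - \<epsilon>) * (2 * x) / (x * (x - 2))"
    using pos by (rule divide_strict_right_mono)
  have "(1 + \<epsilon>) * (2 * (x - 1) / (x * (x - 2))) = (1 + \<epsilon>) * (2 * (x - 1)) / (x * (x - 2))"
    by (rule times_divide_eq_right)
  also have "\<dots> < (1 - \<epsilon>) * (2 * x) / (x * (x - 2))" by (rule lt)
  also have "\<dots> = (1 - \<epsilon>) * (2 / (x - 2))"
    using x by (simp add: field_simps)
  finally show ?thesis .
qed

lemma lower_bound:
  assumes e: "0 < \<epsilon>" "\<epsilon> < 1"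
    and H: "\<forall>G s t. valid_graph G \<and> expander (1/4) G \<and> s < nv G \<and> t < nv G \<longrightarrow>
            success_prob (A (nv G) s t) G s t \<epsilon> q \<ge> 2/3"
  shows "real q \<ge> (1/40) / \<epsilon>"
proof (rule ccontr)
  assume "\<not> real q \<ge> (1/40) / \<epsilon>"
  then have "real q < (1/40) / \<epsilon>" by simp
  then have qe: "real q * \<epsilon> < 1/40" using e by (simp add: pos_less_divide_eq)
  have Hs: "\<And>G. valid_graph G \<Longrightarrow> expander (1/4) G \<Longrightarrow> 1 < nv G \<Longrightarrow>
      2/3 \<le> measure_pmf.prob (run G (A (nv G) 0 1) q) (SS \<epsilon> (eff_res G 0 1))"
    using H unfolding success_SS by auto
  have pm0: "pm 0 = 1" by (simp add: pm_def)
  show False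
  proof (cases "q = 0")
    case True
    obtain N :: nat where N: "(1 + \<epsilon>) / (1 - \<epsilon>) < real N" using reals_Archimedean2 by blast
    define m where "m = 2 * N + 3"
    define n where "n = Suc m"
    have n: "even n" "4 \<le> n" unfolding n_def m_def by auto
    have m2: "2 \<le> m" unfolding m_def by simp
    have star: "2/3 \<le> measure_pmf.prob (run (starg m) (A n 0 1) 0) (SS \<epsilon> 2)"
      using Hs[OF st_valid st_expander[OF m2]] m2 True st_eff[OF m2] unfolding n_def by simp
    have gpm: "good n pm" by (rule good_pm[OF n(1)])
    have cp: "2/3 \<le> measure_pmf.prob (run (cpg n pm) (A n 0 1) 0) (SS \<epsilon> (2 / (real n - 2)))"
      using Hs[OF cp_valid[OF gpm n(1)] cp_expander[OF gpm n]] n True cp_eff[OF gpm n] pm0 by simp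
    have same: "run (starg m) (A n 0 1) 0 = run (cpg n pm) (A n 0 1) 0"
      by (rule run_zero) (simp add: n_def)
    have "(1 + \<epsilon>) * (2 / (real n - 2)) < (1 - \<epsilon>) * 2"
    proof -
      have "(1 + \<epsilon>) < (1 - \<epsilon>) * real N" using N e by (simp add: pos_divide_less_eq mult.commute)
      also have "\<dots> \<le> (1 - \<epsilon>) * (real n - 2)" using e unfolding n_def m_def by simp
      finally have a: "1 + \<epsilon> < (1 - \<epsilon>) * (real n - 2)" .
      have pos: "0 < real n - 2" using n by simp
      have "(1 + \<epsilon>) * (2 / (real n - 2)) = 2 * ((1 + \<epsilon>) / (real n - 2))" by simp
      also have "(1 + \<epsilon>) / (real n - 2) < 1 - \<epsilon>" using a pos by (simp add: pos_divide_less_eq)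
      finally show ?thesis by simp
    qed
    then have "SS \<epsilon> 2 \<inter> SS \<epsilon> (2 / (real n - 2)) = {}" by (rule SS_disj)
    then have "measure_pmf.prob (run (cpg n pm) (A n 0 1) 0) (SS \<epsilon> 2)
       + measure_pmf.prob (run (cpg n pm) (A n 0 1) 0) (SS \<epsilon> (2 / (real n - 2))) \<le> 1"
      by (rule prob_disj_le)
    then show False using star cp same by simp
  next
    case False
    then have q1: "1 \<le> q" by simp
    define K where "K = 3 * q + 2"
    define n where "n = 2 * K"
    define I where "I = {1..<K}"
    have n: "even n" "4 \<le> n" unfolding n_def K_def using q1 by auto
    have gpm: "good n pm" by (rule good_pm[OF n(1)])
    have gpj: "\<And>j. j \<in> I \<Longrightarrow> good n (pj j)"
      unfolding I_def n_def by (rule good_pj) auto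
    define G0 where "G0 = cpg n pm"
    define D where "D = (\<lambda>j. {(v, i). nbr G0 v i \<noteq> nbr (cpg n (pj j)) v i})"
    have uniq: "\<And>x j j'. j \<in> I \<Longrightarrow> j' \<in> I \<Longrightarrow> x \<in> D j \<Longrightarrow> x \<in> D j' \<Longrightarrow> j = j'"
    proof -
      fix x j j' assume j: "j \<in> I" "j' \<in> I" and x: "x \<in> D j" "x \<in> D j'"
      obtain v i where xv: "x = (v, i)" by (cases x)
      have a: "cfilt n v ! i = pj j v \<and> pj j v \<noteq> pm v"
        using nbr_diff[OF gpj[OF j(1)] n(1)] x(1) unfolding xv D_def G0_def by auto
      have b: "cfilt n v ! i = pj j' v"
        using nbr_diff[OF gpj[OF j(2)] n(1)] x(2) unfolding xv D_def G0_def by auto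
      show "j = j'" using pj_uniq[of j j' v] a b j unfolding I_def by auto
    qed
    have avg: "(\<Sum>j\<in>I. hitp G0 (D j) (A n 0 1) q) \<le> real q"
      by (rule averaging) (use uniq in \<open>auto simp: I_def\<close>)
    have cI: "card I = 3 * q + 1" unfolding I_def K_def by simp
    obtain j where jI: "j \<in> I" and hj: "hitp G0 (D j) (A n 0 1) q \<le> real q / real (3 * q + 1)"
    proof (rule ccontr)
      assume "\<not> thesis"
      then have lt: "\<And>j. j \<in> I \<Longrightarrow> real q / real (3 * q + 1) < hitp G0 (D j) (A n 0 1) q"
        using that by force
      have "I \<noteq> {}" using cI by auto
      then have "(\<Sum>j\<in>I. real q / real (3 * q + 1)) < (\<Sum>j\<in>I. hitp G0 (D j) (A n 0 1) q)"
        using lt by (intro sum_strict_mono) (auto simp: I_def)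
      also have "(\<Sum>j\<in>I. real q / real (3 * q + 1)) = real q" using cI by simp
      finally show False using avg by simp
    qed
    define Gj where "Gj = cpg n (pj j)"
    have gj: "good n (pj j)" by (rule gpj[OF jI])
    have j1: "1 \<le> j" using jI unfolding I_def by simp
    have pj0: "pj j 0 \<noteq> 1" using j1 unfolding pj_def by simp
    define R0 where "R0 = 2 / (real n - 2)"
    define Rj where "Rj = 2 * (real n - 1) / (real n * (real n - 2))"
    have eff0: "eff_res G0 0 1 = R0" unfolding G0_def R0_def using cp_eff[OF gpm n] pm0 by simp
    have effj: "eff_res Gj 0 1 = Rj" unfolding Gj_def Rj_def using cp_eff[OF gj n] pj0 by simp
    have P0: "2/3 \<le> measure_pmf.prob (run G0 (A n 0 1) q) (SS \<epsilon> R0)"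
      using Hs[of G0] cp_valid[OF gpm n(1)] cp_expander[OF gpm n] n eff0 unfolding G0_def by simp
    have Pj: "2/3 \<le> measure_pmf.prob (run Gj (A n 0 1) q) (SS \<epsilon> Rj)"
      using Hs[of Gj] cp_valid[OF gj n(1)] cp_expander[OF gj n] n effj unfolding Gj_def by simp
    have coup: "\<bar>measure_pmf.prob (run G0 (A n 0 1) q) (SS \<epsilon> R0) - measure_pmf.prob (run Gj (A n 0 1) q) (SS \<epsilon> R0)\<bar>
        \<le> hitp G0 (D j) (A n 0 1) q"
    proof (rule coupling)
      show "nv Gj = nv G0" unfolding Gj_def G0_def by simp
      show "0 < nv G0" unfolding G0_def using n by simp
      show "deg Gj v = deg G0 v" for v
      proof (cases "v < n")
        case True then show ?thesis unfolding Gj_def G0_def using cp_deg[OF gj n(1) True] cp_deg[OF gpm n(1) True] by simp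
      next
        case False then show ?thesis unfolding Gj_def G0_def deg_def by simp
      qed
      show "nbr Gj v i = nbr G0 v i" if "(v, i) \<notin> D j" for v i
        using that unfolding D_def Gj_def by auto
    qed
    have "\<epsilon> \<le> real q * \<epsilon>" using q1 e by simp
    then have "\<epsilon> * (2 * real n - 1) < 1"
      using qe unfolding n_def K_def by (simp add: algebra_simps)
    then have "(1 + \<epsilon>) * Rj < (1 - \<epsilon>) * R0"
      unfolding Rj_def R0_def using gap_ineq[of "real n" \<epsilon>] n e by simp
    then have "SS \<epsilon> R0 \<inter> SS \<epsilon> Rj = {}" by (rule SS_disj)
    then have "measure_pmf.prob (run Gj (A n 0 1) q) (SS \<epsilon> R0) + measure_pmf.prob (run Gj (A n 0 1) q) (SS \<epsilon> Rj) \<le> 1"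
      by (rule prob_disj_le)
    then have "1/3 \<le> hitp G0 (D j) (A n 0 1) q" using P0 Pj coup by (simp add: abs_le_iff)
    moreover have "real q / real (3 * q + 1) < 1/3" using q1 by (simp add: divide_less_eq)
    ultimately show False using hj by linarith
  qed
qed

theorem theorem2:
  shows "\<exists>c > 0. \<exists>C > 0. \<forall>\<epsilon>::real. 0 < \<epsilon> \<and> \<epsilon> < 1 \<longrightarrow>
     (\<forall>(A :: nat \<Rightarrow> nat \<Rightarrow> nat \<Rightarrow> qalg) (q :: nat).
        (\<forall>G s t. valid_graph G \<and> expander c G \<and> s < nv G \<and> t < nv G \<longrightarrow>
            success_prob (A (nv G) s t) G s t \<epsilon> q \<ge> 2/3)
        \<longrightarrow> real q \<ge> C / \<epsilon>)"
proof (rule exI[of _ "1/4"], intro conjI)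
  show "(0::real) < 1/4" by simp
  show "\<exists>C > 0. \<forall>\<epsilon>::real. 0 < \<epsilon> \<and> \<epsilon> < 1 \<longrightarrow>
     (\<forall>(A :: nat \<Rightarrow> nat \<Rightarrow> nat \<Rightarrow> qalg) (q :: nat).
        (\<forall>G s t. valid_graph G \<and> expander (1/4) G \<and> s < nv G \<and> t < nv G \<longrightarrow>
            success_prob (A (nv G) s t) G s t \<epsilon> q \<ge> 2/3)
        \<longrightarrow> real q \<ge> C / \<epsilon>)"
  proof (rule exI[of _ "1/40"], intro conjI)
    show "(0::real) < 1/40" by simp
    show "\<forall>\<epsilon>::real. 0 < \<epsilon> \<and> \<epsilon> < 1 \<longrightarrow>
     (\<forall>(A :: nat \<Rightarrow> nat \<Rightarrow> nat \<Rightarrow> qalg) (q :: nat).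
        (\<forall>G s t. valid_graph G \<and> expander (1/4) G \<and> s < nv G \<and> t < nv G \<longrightarrow>
            success_prob (A (nv G) s t) G s t \<epsilon> q \<ge> 2/3)
        \<longrightarrow> real q \<ge> (1/40) / \<epsilon>)"
      using lower_bound by blast
  qed
qed

end
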